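(* Let $g:\mathbb{R}^2\to\mathbb{R}^2$ be a $C^1$ map with $g(0)=0$, let $L>0$, and for $\delta>0$ let $\tilde S(\delta)=\{(x,y):|y|\le L|x|,\ |x|\le\delta\}$. Let $\tilde U=[-\alpha,\alpha]\times[-\beta,\beta]$ with $\alpha,\beta>0$ and $\beta/\alpha>L$. Let $\tilde v:[-1,1]\to\tilde U$ be continuous with $\tilde v(-1)\in\{y=-Lx\}$, $\tilde v(1)\in\{y=Lx\}$ and $\pi_x\tilde v(s)\neq0$ for all $s\in[-1,1]$. Assume that for every matrix $C\in[Dg(\tilde U)]$ and every $y$ with $|y|\le L$ we have $|\pi_x C(1,y)|>1$ and $|\pi_y C(1,y)|\le L$. Then for every $\delta>0$ there exist $p\in\tilde S(\delta)$ and an integer $n\ge0$ such that $g^k(p)\in\tilde U$ for $0\le k\le n$ and $g^n(p)\in\tilde v([-1,1])$.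
   Context: $\pi_x,\pi_y$ denote the projections of $\mathbb{R}^2$ onto the first and second coordinates. For a set $U\subset\mathbb{R}^2$, $[Dg(U)]$ denotes the interval enclosure of the derivative: the set of all $2\times2$ matrices $(a_{ij})$ with $a_{ij}\in[\inf_{p\in U}\partial g_i/\partial x_j(p),\ \sup_{p\in U}\partial g_i/\partial x_j(p)]$. *)

theory Defs
  imports "HOL-Analysis.Analysis"
begin

definition pix :: "real^2 \<Rightarrow> real" where "pix p = p $ 1"
definition piy :: "real^2 \<Rightarrow> real" where "piy p = p $ 2"

definition C1_map :: "(real^2 \<Rightarrow> real^2) \<Rightarrow> bool" where
  "C1_map g \<longleftrightarrow> (\<forall>p. g differentiable (at p)) \<and>
     (\<forall>i j. continuous_on UNIV (\<lambda>p. jacobian g (at p) $ i $ j))"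

definition interval_enclosure :: "(real^2 \<Rightarrow> real^2) \<Rightarrow> (real^2) set \<Rightarrow> (real^2^2) set" where
  "interval_enclosure g U = {C. \<forall>i j.
      (INF p\<in>U. jacobian g (at p) $ i $ j) \<le> C $ i $ j \<and>
      C $ i $ j \<le> (SUP p\<in>U. jacobian g (at p) $ i $ j)}"

definition S_tilde :: "real \<Rightarrow> real \<Rightarrow> (real^2) set" where
  "S_tilde L \<delta> = {p. \<bar>pix p\<bar> \<le> \<delta> \<and> \<bar>piy p\<bar> \<le> L * \<bar>pix p\<bar>}"

definition U_tilde :: "real \<Rightarrow> real \<Rightarrow> (real^2) set" where
  "U_tilde \<alpha> \<beta> = {p. \<bar>pix p\<bar> \<le> \<alpha> \<and> \<bar>piy p\<bar> \<le> \<beta>}"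

end

theory Submission
  imports Defs
begin


lemma pix_simps[simp]: "pix (a + b) = pix a + pix b" "pix (a - b) = pix a - pix b"
  "pix (- a) = - pix a" "pix (c *\<^sub>R a) = c * pix a" "pix 0 = 0"
  "piy (a + b) = piy a + piy b" "piy (a - b) = piy a - piy b"
  "piy (- a) = - piy a" "piy (c *\<^sub>R a) = c * piy a" "piy 0 = 0"
  by (simp_all add: pix_def piy_def)

lemma pix_mv: "pix ((A::real^2^2) *v x) = A$1$1 * x$1 + A$1$2 * x$2"
  by (simp add: pix_def matrix_vector_mult_def sum_2)
lemma piy_mv: "piy ((A::real^2^2) *v x) = A$2$1 * x$1 + A$2$2 * x$2"
  by (simp add: piy_def matrix_vector_mult_def sum_2)

lemma vec2_eq: "pix a = pix b \<Longrightarrow> piy a = piy b \<Longrightarrow> a = (b::real^2)"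
  by (simp add: vec_eq_iff forall_2 pix_def piy_def)

lemma pix_axis[simp]: "pix (axis 1 1 :: real^2) = 1" "piy (axis 1 1 :: real^2) = 0"
  by (simp_all add: pix_def piy_def axis_def)

lemma conv_abs: "\<bar>a::real\<bar> \<le> M \<Longrightarrow> \<bar>b\<bar> \<le> M \<Longrightarrow> 0 \<le> t \<Longrightarrow> t \<le> 1 \<Longrightarrow> \<bar>a + t * (b - a)\<bar> \<le> M"
proof -
  assume h: "\<bar>a\<bar> \<le> M" "\<bar>b\<bar> \<le> M" "0 \<le> t" "t \<le> 1"
  have e: "a + t * (b - a) = (1-t)*a + t*b" by (simp add: algebra_simps)
  have "\<bar>(1-t)*a\<bar> \<le> (1-t)*M" using h by (simp add: abs_mult mult_left_mono)
  moreover have "\<bar>t*b\<bar> \<le> t*M" using h by (simp add: abs_mult mult_left_mono)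
  moreover have "\<bar>(1-t)*a + t*b\<bar> \<le> \<bar>(1-t)*a\<bar> + \<bar>t*b\<bar>" by (rule abs_triangle_ineq)
  moreover have "(1-t)*M + t*M = M" by (simp add: algebra_simps)
  ultimately show ?thesis unfolding e by linarith
qed

lemma comp_mvt:
  fixes g :: "real^2 \<Rightarrow> real^2"
  assumes diff: "\<forall>p. g differentiable (at p)"
  shows "\<exists>\<xi>. 0 < \<xi> \<and> \<xi> < 1 \<and> g (p + d) $ i - g p $ i = (jacobian g (at (p + \<xi> *\<^sub>R d)) *v d) $ i"
proof -
  have der: "((\<lambda>t. g (p + t *\<^sub>R d) $ i) has_derivative (\<lambda>h. (jacobian g (at (p + t *\<^sub>R d)) *v (h *\<^sub>R d)) $ i)) (at t within {0..1})" for t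
  proof -
    have "(g has_derivative (\<lambda>h. jacobian g (at (p + t *\<^sub>R d)) *v h)) (at (p + t *\<^sub>R d))"
      using diff jacobian_works[of g] by simp
    moreover have "((\<lambda>t. p + t *\<^sub>R d) has_derivative (\<lambda>h. h *\<^sub>R d)) (at t within {0..1})"
      by (auto intro!: derivative_eq_intros)
    ultimately have "((\<lambda>t. g (p + t *\<^sub>R d)) has_derivative (\<lambda>h. jacobian g (at (p + t *\<^sub>R d)) *v (h *\<^sub>R d))) (at t within {0..1})"
      using has_derivative_compose by blast
    then show ?thesis by (rule bounded_linear.has_derivative[OF bounded_linear_vec_nth])
  qed
  have "\<exists>x\<in>{0<..<1}. g (p + 1 *\<^sub>R d) $ i - g (p + 0 *\<^sub>R d) $ i = (jacobian g (at (p + x *\<^sub>R d)) *v ((1 - 0) *\<^sub>R d)) $ i"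
    by (rule mvt_simple[of 0 1 "\<lambda>t. g (p + t *\<^sub>R d) $ i", OF _ der]) simp
  then obtain x where "x \<in> {0<..<1}" and "g (p + 1 *\<^sub>R d) $ i - g (p + 0 *\<^sub>R d) $ i = (jacobian g (at (p + x *\<^sub>R d)) *v ((1 - 0) *\<^sub>R d)) $ i"
    by blast
  then show ?thesis by (intro exI[of _ x]) simp
qed


locale setting =
  fixes g :: "real^2 \<Rightarrow> real^2" and L \<alpha> \<beta> \<sigma> lam :: real
  assumes diff: "\<forall>p. g differentiable (at p)"
    and g0: "g 0 = 0" and Lpos: "L > 0" and apos: "\<alpha> > 0" and bL: "L*\<alpha> < \<beta>"
    and sig: "\<sigma> = 1 \<or> \<sigma> = -1" and lam: "lam > 1"
    and bdd: "\<forall>i j. bdd_below ((\<lambda>p. jacobian g (at p) $ i $ j) ` U_tilde \<alpha> \<beta>) \<and>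
                   bdd_above ((\<lambda>p. jacobian g (at p) $ i $ j) ` U_tilde \<alpha> \<beta>)"
    and key: "\<forall>C\<in>interval_enclosure g (U_tilde \<alpha> \<beta>). \<forall>y. \<bar>y\<bar> \<le> L \<longrightarrow>
           lam \<le> \<sigma> * pix (C *v vector [1, y]) \<and> \<bar>piy (C *v vector [1, y])\<bar> \<le> L"
begin

definition cone :: "real^2 \<Rightarrow> bool" where "cone d \<longleftrightarrow> \<bar>piy d\<bar> \<le> L * \<bar>pix d\<bar>"

lemma inU: "q \<in> U_tilde \<alpha> \<beta> \<longleftrightarrow> \<bar>pix q\<bar> \<le> \<alpha> \<and> \<bar>piy q\<bar> \<le> \<beta>"
  by (simp add: U_tilde_def)

lemma inU_cone: assumes "\<bar>pix q\<bar> \<le> \<alpha>" "cone q" shows "q \<in> U_tilde \<alpha> \<beta>"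
proof -
  have "L * \<bar>pix q\<bar> \<le> L * \<alpha>" using assms Lpos by (simp add: mult_left_mono)
  then show ?thesis using assms bL by (auto simp: inU cone_def)
qed

lemma cone_neg[simp]: "cone (-d) = cone d" and cone_0[simp]: "cone 0"
  by (auto simp: cone_def)

lemma seg_in_U: "p \<in> U_tilde \<alpha> \<beta> \<Longrightarrow> q \<in> U_tilde \<alpha> \<beta> \<Longrightarrow> 0 \<le> t \<Longrightarrow> t \<le> 1 \<Longrightarrow> p + t *\<^sub>R (q - p) \<in> U_tilde \<alpha> \<beta>"
  by (simp add: inU conv_abs)

lemma cone_swap: "cone (a - b) = cone (b - a)"
  using cone_neg[of "b - a"] by simp

lemma sig_abs: "\<bar>\<sigma> * x\<bar> = \<bar>x\<bar>" "\<sigma> * \<sigma> = 1"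
  using sig by auto

lemma mvt_step:
  assumes p: "p \<in> U_tilde \<alpha> \<beta>" and q: "q \<in> U_tilde \<alpha> \<beta>" and c: "cone (q - p)"
  shows "\<exists>c. lam \<le> \<sigma>*c \<and> pix (g q - g p) = c * pix (q - p) \<and> cone (g q - g p)"
proof (cases "pix (q - p) = 0")
  case True
  then have "piy (q-p) = 0" using c by (simp add: cone_def)
  then have "q = p" using True vec2_eq[of "q-p" 0] by simp
  then show ?thesis using sig by (intro exI[of _ "\<sigma>*lam"]) (auto simp: cone_def)
next
  case False
  define d where "d = q - p"
  have qd: "q = p + d" by (simp add: d_def)
  obtain \<xi>1 where x1: "0 < \<xi>1" "\<xi>1 < 1" "g (p + d) $ 1 - g p $ 1 = (jacobian g (at (p + \<xi>1 *\<^sub>R d)) *v d) $ 1"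
    using comp_mvt[OF diff] by blast
  obtain \<xi>2 where x2: "0 < \<xi>2" "\<xi>2 < 1" "g (p + d) $ 2 - g p $ 2 = (jacobian g (at (p + \<xi>2 *\<^sub>R d)) *v d) $ 2"
    using comp_mvt[OF diff] by blast
  define M :: "real^2^2" where "M = (\<chi> i j. if i = 1 then jacobian g (at (p + \<xi>1 *\<^sub>R d)) $ i $ j else jacobian g (at (p + \<xi>2 *\<^sub>R d)) $ i $ j)"
  have U1: "p + \<xi>1 *\<^sub>R d \<in> U_tilde \<alpha> \<beta>" using seg_in_U[OF p q] x1 d_def by simp
  have U2: "p + \<xi>2 *\<^sub>R d \<in> U_tilde \<alpha> \<beta>" using seg_in_U[OF p q] x2 d_def by simp
  have ME: "M \<in> interval_enclosure g (U_tilde \<alpha> \<beta>)"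
    unfolding interval_enclosure_def
  proof (intro CollectI allI)
    fix i j :: 2
    have b1: "bdd_below ((\<lambda>p. jacobian g (at p) $ i $ j) ` U_tilde \<alpha> \<beta>)"
      and b2: "bdd_above ((\<lambda>p. jacobian g (at p) $ i $ j) ` U_tilde \<alpha> \<beta>)" using bdd by auto
    consider "i = 1" | "i = 2" using exhaust_2 by blast
    then show "(INF p\<in>U_tilde \<alpha> \<beta>. jacobian g (at p) $ i $ j) \<le> M $ i $ j \<and> M $ i $ j \<le> (SUP p\<in>U_tilde \<alpha> \<beta>. jacobian g (at p) $ i $ j)"
    proof cases
      case 1
      then show ?thesis using cINF_lower[OF b1 U1] cSUP_upper[OF U1 b2] by (simp add: M_def)
    next
      case 2
      then show ?thesis using cINF_lower[OF b1 U2] cSUP_upper[OF U2 b2] by (simp add: M_def)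
    qed
  qed
  have gx: "pix (g q - g p) = M$1$1 * pix d + M$1$2 * piy d"
    using x1(3) unfolding qd by (simp add: M_def matrix_vector_mult_def sum_2 pix_def piy_def)
  have gy: "piy (g q - g p) = M$2$1 * pix d + M$2$2 * piy d"
    using x2(3) unfolding qd by (simp add: M_def matrix_vector_mult_def sum_2 pix_def piy_def)
  have d0: "pix d \<noteq> 0" using False d_def by simp
  define y where "y = piy d / pix d"
  have "\<bar>piy d\<bar> \<le> L * \<bar>pix d\<bar>" using c d_def by (simp add: cone_def)
  then have y: "\<bar>y\<bar> \<le> L" using d0 by (simp add: y_def abs_divide divide_le_eq)
  have dy: "piy d = pix d * y" using d0 by (simp add: y_def)
  have k: "lam \<le> \<sigma> * (M$1$1 + M$1$2 * y)" "\<bar>M$2$1 + M$2$2 * y\<bar> \<le> L"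
    using key ME y by (auto simp: pix_mv piy_mv)
  define cc where "cc = M$1$1 + M$1$2 * y"
  have c1: "pix (g q - g p) = cc * pix d" using gx dy by (simp add: cc_def algebra_simps)
  have c2: "piy (g q - g p) = pix d * (M$2$1 + M$2$2 * y)" using gy dy by (simp add: algebra_simps)
  have "\<sigma>*cc \<le> \<bar>\<sigma>*cc\<bar>" by simp
  then have "\<bar>cc\<bar> \<ge> 1" using k(1) lam sig_abs(1)[of cc] unfolding cc_def by linarith
  have "\<bar>piy (g q - g p)\<bar> = \<bar>pix d\<bar> * \<bar>M$2$1 + M$2$2 * y\<bar>" using c2 by (simp add: abs_mult)
  also have "\<dots> \<le> \<bar>pix d\<bar> * L" using k(2) by (simp add: mult_left_mono)
  also have "\<dots> \<le> \<bar>pix d\<bar> * L * \<bar>cc\<bar>" using mult_left_mono[OF \<open>\<bar>cc\<bar> \<ge> 1\<close>, of "\<bar>pix d\<bar> * L"] Lpos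
    by simp
  also have "\<dots> = L * \<bar>pix (g q - g p)\<bar>" using c1 by (simp add: abs_mult)
  finally have "cone (g q - g p)" by (simp add: cone_def)
  then show ?thesis using k(1) c1 unfolding cc_def d_def by blast
qed


definition P :: "real \<Rightarrow> real^2" where "P t = t *\<^sub>R axis 1 1"

lemma P_simps[simp]: "pix (P t) = t" "piy (P t) = 0" "P 0 = 0"
  by (simp_all add: P_def)

definition Gs :: "nat \<Rightarrow> real \<Rightarrow> bool" where "Gs k t \<longleftrightarrow> (\<forall>j<k. (g^^j) (P t) \<in> U_tilde \<alpha> \<beta>)"

lemma funpow0[simp]: "(g^^k) 0 = 0"
  by (induct k) (simp_all add: g0)

lemma zero_U: "0 \<in> U_tilde \<alpha> \<beta>"
  using apos bL Lpos by (simp add: inU) (smt (verit) mult_pos_pos)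

lemma Gs0: "Gs k 0"
  using zero_U by (simp add: Gs_def)

lemma Gs_Suc: "Gs (Suc k) t \<longleftrightarrow> Gs k t \<and> (g^^k) (P t) \<in> U_tilde \<alpha> \<beta>"
  by (auto simp: Gs_def less_Suc_eq)

lemma sigk: "\<sigma>^k = 1 \<or> \<sigma>^k = -1"
  using sig by (induct k) auto

lemma claim: "Gs k t1 \<Longrightarrow> Gs k t2 \<Longrightarrow> t1 \<le> t2 \<Longrightarrow>
   cone ((g^^k) (P t2) - (g^^k) (P t1)) \<and> lam^k * (t2 - t1) \<le> \<sigma>^k * pix ((g^^k) (P t2) - (g^^k) (P t1))"
proof (induction k)
  case 0
  then show ?case using Lpos by (simp add: cone_def)
next
  case (Suc k)
  let ?A1 = "(g^^k) (P t1)" and ?A2 = "(g^^k) (P t2)"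
  have G: "Gs k t1" "Gs k t2" "?A1 \<in> U_tilde \<alpha> \<beta>" "?A2 \<in> U_tilde \<alpha> \<beta>" using Suc.prems Gs_Suc by auto
  have IH: "cone (?A2 - ?A1)" "lam^k * (t2 - t1) \<le> \<sigma>^k * pix (?A2 - ?A1)" using Suc.IH[OF G(1,2) Suc.prems(3)] by auto
  obtain c where c: "lam \<le> \<sigma>*c" "pix (g ?A2 - g ?A1) = c * pix (?A2 - ?A1)" "cone (g ?A2 - g ?A1)"
    using mvt_step[OF G(3,4) IH(1)] by blast
  have "lam * (lam^k * (t2 - t1)) \<le> (\<sigma>*c) * (\<sigma>^k * pix (?A2 - ?A1))"
  proof (rule mult_mono[OF c(1) IH(2)])
    show "0 \<le> \<sigma> * c" using c(1) lam by linarith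
    show "0 \<le> lam ^ k * (t2 - t1)" using lam Suc.prems(3) by simp
  qed
  also have "\<dots> = \<sigma>^(Suc k) * (c * pix (?A2 - ?A1))" by (simp only: power_Suc mult_ac)
  also have "\<dots> = \<sigma>^(Suc k) * pix (g ?A2 - g ?A1)" by (subst c(2)) (rule refl)
  finally show ?case using c(3) by (simp add: algebra_simps)
qed

lemma claim_u: assumes u: "u = 1 \<or> u = -1" and "Gs k (u*r1)" "Gs k (u*r2)" "r1 \<le> r2"
  shows "cone ((g^^k) (P (u*r2)) - (g^^k) (P (u*r1))) \<and>
         lam^k * (r2 - r1) \<le> u * \<sigma>^k * pix ((g^^k) (P (u*r2)) - (g^^k) (P (u*r1)))"
  using u
proof
  assume "u = 1" then show ?thesis using claim assms by simp
next
  assume u1: "u = -1"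
  have "cone ((g^^k) (P (-r1)) - (g^^k) (P (-r2))) \<and> lam^k * (-r1 - -r2) \<le> \<sigma>^k * pix ((g^^k) (P (-r1)) - (g^^k) (P (-r2)))"
    using claim[of k "-r2" "-r1"] assms u1 by simp
  then show ?thesis using u1 cone_swap by (simp add: algebra_simps)
qed

lemma min_lam: assumes "1 \<le> l" "0 \<le> a" "0 \<le> (x::real)" shows "min a (l*x) \<le> l * min a x"
proof (cases "a \<le> x")
  case True
  have "a \<le> l*a" using mult_right_mono[of 1 l a] assms by simp
  then show ?thesis using True by (simp add: min_def)
next
  case False
  then show ?thesis by (simp add: min_def)
qed

lemma abs_mono_w: "w = 1 \<or> w = -1 \<Longrightarrow> 0 \<le> w*a \<Longrightarrow> w*a \<le> w*b \<Longrightarrow> \<bar>a\<bar> \<le> \<bar>(b::real)\<bar>"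
  by auto

lemma lam_pos: "0 < lam" using lam by simp

lemma downward: assumes u: "u = 1 \<or> u = -1" shows "Gs k (u*r) \<Longrightarrow> 0 \<le> r' \<Longrightarrow> r' \<le> r \<Longrightarrow> Gs k (u*r')"
proof (induction k)
  case 0
  then show ?case by (simp add: Gs_def)
next
  case (Suc k)
  have G: "Gs k (u*r)" "(g^^k) (P (u*r)) \<in> U_tilde \<alpha> \<beta>" using Suc.prems Gs_Suc by auto
  have G': "Gs k (u*r')" using Suc.IH[OF G(1)] Suc.prems by auto
  have G0: "Gs k (u*0)" using Gs0 by simp
  have a: "cone ((g^^k) (P (u*r'))) \<and> lam^k * (r' - 0) \<le> u * \<sigma>^k * pix ((g^^k) (P (u*r')))"
    using claim_u[OF u G0 G'] Suc.prems by simp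
  have b: "lam^k * (r - r') \<le> u * \<sigma>^k * pix ((g^^k) (P (u*r)) - (g^^k) (P (u*r')))"
    using claim_u[OF u G' G(1)] Suc.prems by simp
  have w: "u * \<sigma>^k = 1 \<or> u * \<sigma>^k = -1" using u sigk[of k] by auto
  have p1: "0 \<le> lam^k * (r - r')" "0 \<le> lam^k * r'" using lam_pos Suc.prems by simp_all
  have "\<bar>pix ((g^^k) (P (u*r')))\<bar> \<le> \<bar>pix ((g^^k) (P (u*r)))\<bar>"
    apply (rule abs_mono_w[OF w])
    using a b p1 by (simp_all add: algebra_simps)
  also have "\<dots> \<le> \<alpha>" using G(2) by (simp add: inU)
  finally have "(g^^k) (P (u*r')) \<in> U_tilde \<alpha> \<beta>" using inU_cone a by blast
  then show ?case using G' Gs_Suc by blast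
qed


lemma g_cont: "continuous_on UNIV g"
  using diff by (intro continuous_at_imp_continuous_on ballI differentiable_imp_continuous_within) auto

lemma cont_funpow: "continuous_on UNIV (g^^k)"
proof (induction k)
  case 0 then show ?case by (simp add: continuous_on_id)
next
  case (Suc k)
  then show ?case using continuous_on_compose[OF Suc, of g] g_cont
    by (simp add: continuous_on_subset)
qed

lemma cont_funpow'[continuous_intros]: "continuous_on S f \<Longrightarrow> continuous_on S (\<lambda>x. (g^^k) (f x))"
  by (rule continuous_on_compose2[OF cont_funpow]) auto

lemma cont_P[continuous_intros]: "continuous_on S f \<Longrightarrow> continuous_on S (\<lambda>x. P (f x))"
  unfolding P_def by (intro continuous_intros)

lemma reach: assumes u: "u = 1 \<or> u = -1" and e: "0 < e" "e \<le> \<alpha>"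
  shows "\<exists>r. 0 \<le> r \<and> r \<le> e \<and> Gs (Suc j) (u*r) \<and> min \<alpha> (lam^j*e) \<le> \<bar>pix ((g^^j) (P (u*r)))\<bar>"
proof (induction j)
  case 0
  have "P (u*e) \<in> U_tilde \<alpha> \<beta>" using u e Lpos by (intro inU_cone) (auto simp: cone_def)
  then show ?case using u e by (intro exI[of _ e]) (auto simp: Gs_def)
next
  case (Suc j)
  then obtain r where r: "0 \<le> r" "r \<le> e" "Gs (Suc j) (u*r)" "min \<alpha> (lam^j*e) \<le> \<bar>pix ((g^^j) (P (u*r)))\<bar>"
    by blast
  define B where "B = (g^^j) (P (u*r))"
  have G: "Gs j (u*r)" "B \<in> U_tilde \<alpha> \<beta>" using r(3) Gs_Suc B_def by auto
  have G0: "Gs j (u*0)" using Gs0 by simp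
  have cB: "cone (B - 0)" using claim_u[OF u G0 G(1)] r B_def by simp
  obtain c where c: "lam \<le> \<sigma>*c" "pix (g B - g 0) = c * pix (B - 0)" "cone (g B - g 0)"
    using mvt_step[OF zero_U G(2) cB] by blast
  have "\<sigma>*c \<le> \<bar>\<sigma>*c\<bar>" by simp
  then have cl: "lam \<le> \<bar>c\<bar>" using c(1) sig_abs(1)[of c] by linarith
  have gB: "(g^^Suc j) (P (u*r)) = g B" by (simp add: B_def)
  have "min \<alpha> (lam^Suc j*e) \<le> lam * min \<alpha> (lam^j*e)"
    using min_lam[of lam \<alpha> "lam^j*e"] lam apos e by (simp add: mult.assoc)
  also have "\<dots> \<le> lam * \<bar>pix B\<bar>" using r(4) lam B_def by simp
  also have "\<dots> \<le> \<bar>c\<bar> * \<bar>pix B\<bar>" using cl by (simp add: mult_right_mono)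
  also have "\<dots> = \<bar>pix (g B)\<bar>" using c(2) g0 by (simp add: abs_mult)
  finally have mB: "min \<alpha> (lam^Suc j*e) \<le> \<bar>pix (g B)\<bar>" .
  show ?case
  proof (cases "\<bar>pix (g B)\<bar> \<le> \<alpha>")
    case True
    then have "g B \<in> U_tilde \<alpha> \<beta>" using c(3) g0 inU_cone by simp
    then have "Gs (Suc (Suc j)) (u*r)" using r(3) Gs_Suc gB by simp
    then show ?thesis using r mB gB by (intro exI[of _ r]) auto
  next
    case False
    define \<phi> where "\<phi> x = \<bar>pix ((g^^Suc j) (P (u*x)))\<bar>" for x
    have "continuous_on {0..r} \<phi>" unfolding \<phi>_def pix_def
      by (intro continuous_intros)
    moreover have "\<phi> 0 \<le> \<alpha>" "\<alpha> \<le> \<phi> r" using False apos gB g0 by (auto simp: \<phi>_def)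
    ultimately obtain x where x: "0 \<le> x" "x \<le> r" "\<phi> x = \<alpha>"
      using IVT'[of \<phi> 0 \<alpha> r] r by auto
    have Gx: "Gs (Suc j) (u*x)" using downward[OF u r(3)] x by simp
    have "Gs (Suc j) (u*0)" using Gs0 by simp
    then have "cone ((g^^Suc j) (P (u*x)))" using claim_u[OF u _ Gx, of 0] x g0 by simp
    then have "(g^^Suc j) (P (u*x)) \<in> U_tilde \<alpha> \<beta>" using x(3) inU_cone \<phi>_def by simp
    then have "Gs (Suc (Suc j)) (u*x)" using Gx Gs_Suc by blast
    then show ?thesis using x r mB apos by (intro exI[of _ x]) (auto simp: \<phi>_def)
  qed
qed


end




context setting begin

lemma crossing:
  fixes v :: "real \<Rightarrow> real^2"
  assumes vc: "continuous_on {-1..1} v" and vU: "v ` {-1..1} \<subseteq> U_tilde \<alpha> \<beta>"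
    and vm: "piy (v (-1)) = - L * pix (v (-1))" and vp: "piy (v 1) = L * pix (v 1)"
    and vnz: "\<forall>s\<in>{-1..1}. pix (v s) \<noteq> 0" and \<delta>: "\<delta> > 0"
  shows "\<exists>p n. p \<in> S_tilde L \<delta> \<and> (\<forall>k\<le>(n::nat). (g ^^ k) p \<in> U_tilde \<alpha> \<beta>) \<and> (g ^^ n) p \<in> v ` {-1..1}"
proof -
  define s where "s = (if pix (v (-1)) > 0 then 1 else -1::real)"
  have s: "s = 1 \<or> s = -1" by (simp add: s_def)
  have pvc: "continuous_on {-1..1} (\<lambda>x. pix (v x))"
    unfolding pix_def by (intro continuous_intros vc)
  have sv: "0 < s * pix (v t)" if t: "t \<in> {-1..1}" for t
  proof (rule ccontr)
    assume ns: "\<not> 0 < s * pix (v t)"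
    have nz: "pix (v t) \<noteq> 0" "pix (v (-1)) \<noteq> 0" using vnz t by auto
    have "(pix (v (-1)) > 0 \<and> pix (v t) < 0) \<or> (pix (v (-1)) < 0 \<and> pix (v t) > 0)"
    proof (cases "pix (v (-1)) > 0")
      case True
      then show ?thesis using ns nz by (auto simp: s_def)
    next
      case False
      then show ?thesis using ns nz by (auto simp: s_def)
    qed
    then consider "pix (v (-1)) > 0" "pix (v t) < 0" | "pix (v (-1)) < 0" "pix (v t) > 0" by blast
    then show False
    proof cases
      case 1
      have "continuous_on {-1..t} (\<lambda>x. pix (v x))" by (rule continuous_on_subset[OF pvc]) (use t in auto)
      then obtain x where "-1 \<le> x" "x \<le> t" "pix (v x) = 0" using IVT2'[of "\<lambda>x. pix (v x)" t 0 "-1"] 1 t by auto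
      then show False using vnz t by auto
    next
      case 2
      have "continuous_on {-1..t} (\<lambda>x. pix (v x))" by (rule continuous_on_subset[OF pvc]) (use t in auto)
      then obtain x where "-1 \<le> x" "x \<le> t" "pix (v x) = 0" using IVT'[of "\<lambda>x. pix (v x)" "-1" 0 t] 2 t by auto
      then show False using vnz t by auto
    qed
  qed
  have svabs: "\<bar>pix (v t)\<bar> = s * pix (v t)" if "t \<in> {-1..1}" for t
    using sv[OF that] s by auto
  define e where "e = min \<delta> \<alpha>"
  have e: "0 < e" "e \<le> \<alpha>" "e \<le> \<delta>" using \<delta> apos by (auto simp: e_def)
  obtain j where "\<alpha>/e < lam^j" using real_arch_pow[OF lam] by blast
  then have aj: "\<alpha> \<le> lam^j * e" using e by (simp add: pos_divide_less_eq)
  define u where "u = s * \<sigma>^j"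
  have u: "u = 1 \<or> u = -1" using s sigk[of j] by (auto simp: u_def)
  have us: "u * \<sigma>^j = s" using sigk[of j] by (auto simp: u_def)
  obtain R where R: "0 \<le> R" "R \<le> e" "Gs (Suc j) (u*R)" "min \<alpha> (lam^j*e) \<le> \<bar>pix ((g^^j) (P (u*R)))\<bar>"
    using reach[OF u e(1,2)] by blast
  define A where "A r = (g^^j) (P (u*r))" for r
  have Acont: "continuous_on S A" for S unfolding A_def by (intro continuous_intros)
  have GR: "Gs (Suc j) (u*r)" if "0 \<le> r" "r \<le> R" for r using downward[OF u R(3)] that by simp
  have GR': "Gs j (u*r)" if "0 \<le> r" "r \<le> R" for r using GR[OF that] Gs_Suc by simp
  have AU: "A r \<in> U_tilde \<alpha> \<beta>" if "0 \<le> r" "r \<le> R" for r using GR[OF that] Gs_Suc A_def by simp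
  define X where "X r = s * pix (A r)" for r
  have mono: "lam^j * (r2 - r1) \<le> X r2 - X r1" if "0 \<le> r1" "r1 \<le> r2" "r2 \<le> R" for r1 r2
    using claim_u[OF u GR'[of r1] GR'[of r2]] that us by (simp add: X_def A_def algebra_simps)
  have Acone: "cone (A r)" if "0 \<le> r" "r \<le> R" for r
    using claim_u[OF u _ GR'[of r], of 0] that Gs0 by (simp add: A_def)
  have X0: "X 0 = 0" by (simp add: X_def A_def)
  have lampos: "0 < lam^j" using lam by simp
  have XR: "X R = \<alpha>"
  proof -
    have "\<bar>pix (A R)\<bar> \<le> \<alpha>" using AU[OF R(1) order.refl] by (simp add: inU)
    moreover have "\<alpha> \<le> \<bar>pix (A R)\<bar>" using R(4) aj by (simp add: A_def min_def split: if_splits)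
    moreover have "0 \<le> X R"
    proof -
      have "0 \<le> lam^j * R" using lampos R(1) by simp
      then show ?thesis using mono[of 0 R] R(1) X0 by simp
    qed
    ultimately show ?thesis using s by (auto simp: X_def)
  qed
  have inj: "inj_on X {0..R}"
  proof (rule inj_onI)
    fix a b assume ab: "a \<in> {0..R}" "b \<in> {0..R}" "X a = X b"
    show "a = b"
    proof (rule ccontr)
      assume "a \<noteq> b"
      then consider "a < b" | "b < a" by linarith
      then show False
      proof cases
        case 1
        have "0 < lam^j * (b - a)" using 1 lampos by simp
        then show False using mono[of a b] ab 1 by simp
      next
        case 2
        have "0 < lam^j * (a - b)" using 2 lampos by simp
        then show False using mono[of b a] ab 2 by simp
      qed
    qed
  qed
  have Xcont: "continuous_on {0..R} X" unfolding X_def pix_def A_def by (intro continuous_intros)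
  have Ximg: "X ` {0..R} = {0..\<alpha>}"
  proof
    show "X ` {0..R} \<subseteq> {0..\<alpha>}"
    proof
      fix y assume "y \<in> X ` {0..R}"
      then obtain r where r: "r \<in> {0..R}" "y = X r" by blast
      have "0 \<le> lam^j * r" "0 \<le> lam^j * (R - r)" using lampos r by simp_all
      then have "0 \<le> X r - X 0" "0 \<le> X R - X r" using mono[of 0 r] mono[of r R] r by simp_all
      then show "y \<in> {0..\<alpha>}" using r X0 XR by simp
    qed
  next
    show "{0..\<alpha>} \<subseteq> X ` {0..R}"
    proof
      fix y assume "y \<in> {0..\<alpha>}"
      then obtain r where "0 \<le> r" "r \<le> R" "X r = y" using IVT'[of X 0 y R] Xcont X0 XR R(1) by auto
      then show "y \<in> X ` {0..R}" by auto
    qed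
  qed
  define \<rho> where "\<rho> = the_inv_into {0..R} X"
  have \<rho>1: "\<rho> x \<in> {0..R}" if "x \<in> {0..\<alpha>}" for x
  proof -
    have "x \<in> X ` {0..R}" using that Ximg by simp
    then show ?thesis using the_inv_into_into[OF inj _ order.refl] unfolding \<rho>_def by blast
  qed
  have \<rho>2: "X (\<rho> x) = x" if "x \<in> {0..\<alpha>}" for x
    using f_the_inv_into_f[OF inj, of x] that Ximg by (simp add: \<rho>_def)
  have \<rho>c: "continuous_on {0..\<alpha>} \<rho>"
    using continuous_on_inv[OF Xcont compact_Icc, of \<rho>] the_inv_into_f_f[OF inj] Ximg by (simp add: \<rho>_def)
  define w where "w x = A (\<rho> x)" for x
  have wc: "continuous_on {0..\<alpha>} w"
    unfolding w_def by (rule continuous_on_compose2[OF Acont \<rho>c]) auto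
  define h where "h t = s * pix (v t)" for t
  have hc: "continuous_on {-1..1} h" unfolding h_def using pvc by (intro continuous_intros)
  have hU: "h t \<in> {0..\<alpha>}" if "t \<in> {-1..1}" for t
  proof -
    have "v t \<in> U_tilde \<alpha> \<beta>" using vU that by auto
    then show ?thesis using sv[OF that] svabs[OF that] by (simp add: h_def inU)
  qed
  have whc: "continuous_on {-1..1} (\<lambda>t. w (h t))"
    by (rule continuous_on_compose2[OF wc hc]) (use hU in auto)
  have wx: "pix (w (h t)) = pix (v t)" if "t \<in> {-1..1}" for t
  proof -
    have "s * pix (w (h t)) = s * pix (v t)" using \<rho>2[OF hU[OF that]] by (simp add: X_def w_def h_def)
    then show ?thesis using s by auto
  qed
  have wy: "\<bar>piy (w (h t))\<bar> \<le> L * (s * pix (v t))" if "t \<in> {-1..1}" for t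
    using Acone[of "\<rho> (h t)"] \<rho>1[OF hU[OF that]] wx[OF that] svabs[OF that]
    by (simp add: w_def cone_def)
  define F where "F t = s * (piy (v t) - piy (w (h t)))" for t
  have Fc: "continuous_on {-1..1} F" unfolding F_def piy_def
    using whc vc by (intro continuous_intros)
  have sy: "\<bar>s * y\<bar> = \<bar>y\<bar>" for y using s by auto
  have F1: "F (-1) \<le> 0"
  proof -
    have "F (-1) = - L * (s * pix (v (-1))) - s * piy (w (h (-1)))" using vm by (simp add: F_def algebra_simps)
    moreover have "\<bar>piy (w (h (-1)))\<bar> \<le> L * (s * pix (v (-1)))" using wy[of "-1"] by simp
    moreover have "- (s * piy (w (h (-1)))) \<le> \<bar>s * piy (w (h (-1)))\<bar>" by simp
    ultimately show ?thesis using sy[of "piy (w (h (-1)))"] by linarith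
  qed
  have F2: "0 \<le> F 1"
  proof -
    have "F 1 = L * (s * pix (v 1)) - s * piy (w (h 1))" using vp by (simp add: F_def algebra_simps)
    moreover have "\<bar>piy (w (h 1))\<bar> \<le> L * (s * pix (v 1))" using wy[of 1] by simp
    moreover have "s * piy (w (h 1)) \<le> \<bar>s * piy (w (h 1))\<bar>" by simp
    ultimately show ?thesis using sy[of "piy (w (h 1))"] by linarith
  qed
  obtain t where t: "-1 \<le> t" "t \<le> 1" "F t = 0" using IVT'[of F "-1" 0 1] F1 F2 Fc by auto
  have tt: "t \<in> {-1..1}" using t by simp
  have "piy (w (h t)) = piy (v t)" using t(3) s by (auto simp: F_def)
  then have vt: "v t = A (\<rho> (h t))" using wx[OF tt] vec2_eq by (simp add: w_def)
  define r where "r = \<rho> (h t)"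
  have r: "0 \<le> r" "r \<le> R" using \<rho>1[OF hU[OF tt]] by (auto simp: r_def)
  define p where "p = P (u*r)"
  have "p \<in> S_tilde L \<delta>" using r R e u Lpos by (auto simp: S_tilde_def p_def)
  moreover have "\<forall>k\<le>j. (g ^^ k) p \<in> U_tilde \<alpha> \<beta>" using GR[OF r] by (auto simp: Gs_def p_def)
  moreover have "(g ^^ j) p = v t" using vt by (simp add: p_def A_def r_def)
  then have "(g ^^ j) p \<in> v ` {-1..1}" using tt by (metis image_eqI)
  ultimately show ?thesis by blast
qed

end




theorem mainTheorem17:
  fixes g :: "real^2 \<Rightarrow> real^2" and v :: "real \<Rightarrow> real^2"
    and L \<alpha> \<beta> :: real
  assumes "C1_map g" and "g 0 = 0" and "L > 0"
    and "\<alpha> > 0" and "\<beta> > 0" and "\<beta> / \<alpha> > L"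
    and "continuous_on {-1..1} v" and "v ` {-1..1} \<subseteq> U_tilde \<alpha> \<beta>"
    and "piy (v (-1)) = - L * pix (v (-1))" and "piy (v 1) = L * pix (v 1)"
    and "\<forall>s\<in>{-1..1}. pix (v s) \<noteq> 0"
    and "\<forall>C\<in>interval_enclosure g (U_tilde \<alpha> \<beta>). \<forall>y. \<bar>y\<bar> \<le> L \<longrightarrow>
           \<bar>pix (C *v vector [1, y])\<bar> > 1 \<and> \<bar>piy (C *v vector [1, y])\<bar> \<le> L"
  shows "\<forall>\<delta>>0. \<exists>p n. p \<in> S_tilde L \<delta> \<and> (\<forall>k\<le>(n::nat). (g ^^ k) p \<in> U_tilde \<alpha> \<beta>)
           \<and> (g ^^ n) p \<in> v ` {-1..1}"
proof -
  note C1 = assms(1) and g0 = assms(2) and Lpos = assms(3) and apos = assms(4) and bpos = assms(5)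
    and ba = assms(6) and hyp = assms(12)
  define U where "U = U_tilde \<alpha> \<beta>"
  define J where "J p = jacobian g (at p)" for p
  have diff: "\<forall>p. g differentiable (at p)" using C1 by (simp add: C1_map_def)
  have Jc: "continuous_on UNIV (\<lambda>p. J p $ i $ j)" for i j using C1 by (simp add: C1_map_def J_def)
  have Ucl: "closed U"
  proof -
    have "U = {p. \<bar>p$1\<bar> \<le> \<alpha>} \<inter> {p. \<bar>p$2\<bar> \<le> \<beta>}" by (auto simp: U_def U_tilde_def pix_def piy_def)
    moreover have "closed {p::real^2. \<bar>p$1\<bar> \<le> \<alpha>}"
      by (rule closed_Collect_le) (intro continuous_intros)+
    moreover have "closed {p::real^2. \<bar>p$2\<bar> \<le> \<beta>}"
      by (rule closed_Collect_le) (intro continuous_intros)+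
    ultimately show ?thesis by auto
  qed
  have Ubd: "bounded U"
  proof -
    have "U \<subseteq> cball 0 (\<alpha> + \<beta>)"
    proof
      fix p assume "p \<in> U"
      then have "\<bar>p$1\<bar> \<le> \<alpha>" "\<bar>p$2\<bar> \<le> \<beta>" by (auto simp: U_def U_tilde_def pix_def piy_def)
      moreover have "norm p \<le> \<bar>p$1\<bar> + \<bar>p$2\<bar>" using norm_le_l1_cart[of p] by (simp add: sum_2)
      ultimately show "p \<in> cball 0 (\<alpha> + \<beta>)" by simp
    qed
    then show ?thesis using bounded_subset bounded_cball by blast
  qed
  have Ucp: "compact U" using Ucl Ubd by (simp add: compact_eq_bounded_closed)
  have bdd: "bdd_below ((\<lambda>p. J p $ i $ j) ` U) \<and> bdd_above ((\<lambda>p. J p $ i $ j) ` U)" for i j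
  proof -
    have "compact ((\<lambda>p. J p $ i $ j) ` U)"
      by (rule compact_continuous_image[OF continuous_on_subset[OF Jc] Ucp]) simp
    then have "bounded ((\<lambda>p. J p $ i $ j) ` U)" by (rule compact_imp_bounded)
    then show ?thesis by (simp add: bounded_imp_bdd_below bounded_imp_bdd_above)
  qed
  have U0: "0 \<in> U" using apos bpos by (simp add: U_def U_tilde_def)
  define lo where "lo i j = (INF p\<in>U. J p $ i $ j)" for i j
  define hi where "hi i j = (SUP p\<in>U. J p $ i $ j)" for i j
  have lohi: "lo i j \<le> hi i j" for i j
  proof -
    have "lo i j \<le> J 0 $ i $ j" unfolding lo_def using bdd[of i j] U0 by (intro cINF_lower) auto
    also have "\<dots> \<le> hi i j" unfolding hi_def using bdd[of i j] U0 by (intro cSUP_upper) auto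
    finally show ?thesis .
  qed
  have Edef: "C \<in> interval_enclosure g (U_tilde \<alpha> \<beta>) \<longleftrightarrow> (\<forall>i j. lo i j \<le> C$i$j \<and> C$i$j \<le> hi i j)" for C
    by (simp add: interval_enclosure_def lo_def hi_def J_def U_def)
  define Q where "Q = {lo 1 1..hi 1 1} \<times> {lo 1 2..hi 1 2} \<times> {-L..L}"
  define f where "f q = fst q + fst (snd q) * snd (snd q)" for q :: "real \<times> real \<times> real"
  have fQ: "\<bar>f q\<bar> > 1" if q: "q \<in> Q" for q
  proof -
    obtain a b y where qq: "q = (a, b, y)" by (cases q) auto
    define C :: "real^2^2" where "C = (\<chi> i k. if i = 1 \<and> k = 1 then a else if i = 1 \<and> k = 2 then b else lo i k)"
    have "C \<in> interval_enclosure g (U_tilde \<alpha> \<beta>)"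
      unfolding Edef
    proof (intro allI)
      fix i k :: 2
      show "lo i k \<le> C $ i $ k \<and> C $ i $ k \<le> hi i k"
        using q lohi[of i k] unfolding C_def Q_def qq by auto
    qed
    moreover have "\<bar>y\<bar> \<le> L" using q by (auto simp: Q_def qq)
    ultimately have "\<bar>pix (C *v vector [1, y])\<bar> > 1" using hyp by blast
    then show ?thesis by (simp add: pix_mv C_def f_def qq)
  qed
  have fc: "continuous_on Q f" unfolding f_def by (intro continuous_intros)
  have Qconn: "connected Q" unfolding Q_def
    by (intro convex_connected convex_Times convex_real_interval)
  define \<sigma> where "\<sigma> = (if \<exists>q\<in>Q. f q > 1 then 1 else -1::real)"
  have sf: "\<sigma> * f q > 1" if "q \<in> Q" for q
  proof (cases "\<exists>q\<in>Q. f q > 1")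
    case True
    then obtain q1 where q1: "q1 \<in> Q" "f q1 > 1" by blast
    have "f q > 1"
    proof (rule ccontr)
      assume "\<not> f q > 1"
      then have "f q < -1" using fQ[OF that] by linarith
      moreover have "connected (f ` Q)" using connected_continuous_image[OF fc Qconn] .
      ultimately have "{f q..f q1} \<subseteq> f ` Q" using connected_contains_Icc q1 that by blast
      moreover have "0 \<in> {f q..f q1}" using \<open>f q < -1\<close> q1 by simp
      ultimately obtain q' where "q' \<in> Q" "f q' = 0" by auto
      then show False using fQ by fastforce
    qed
    then show ?thesis using True by (simp add: \<sigma>_def)
  next
    case False
    then have "f q < -1" using fQ[OF that] that by fastforce
    then show ?thesis using False by (simp add: \<sigma>_def)
  qed
  have Qne: "Q \<noteq> {}"
  proof -
    have "(lo 1 1, lo 1 2, 0) \<in> Q" using lohi Lpos by (simp add: Q_def)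
    then show ?thesis by blast
  qed
  have Qcp: "compact Q" unfolding Q_def by (intro compact_Times compact_Icc)
  obtain q0 where q0: "q0 \<in> Q" "\<forall>q\<in>Q. \<sigma> * f q0 \<le> \<sigma> * f q"
  proof -
    have "continuous_on Q (\<lambda>q. \<sigma> * f q)" using fc by (intro continuous_intros)
    then show ?thesis using continuous_attains_inf[OF Qcp Qne, of "\<lambda>q. \<sigma> * f q"] that by blast
  qed
  define lam where "lam = \<sigma> * f q0"
  have lam: "lam > 1" using sf[OF q0(1)] by (simp add: lam_def)
  have key: "\<forall>C\<in>interval_enclosure g (U_tilde \<alpha> \<beta>). \<forall>y. \<bar>y\<bar> \<le> L \<longrightarrow>
           lam \<le> \<sigma> * pix (C *v vector [1, y]) \<and> \<bar>piy (C *v vector [1, y])\<bar> \<le> L"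
  proof (intro ballI allI impI conjI)
    fix C y assume C: "C \<in> interval_enclosure g (U_tilde \<alpha> \<beta>)" and y: "\<bar>y\<bar> \<le> L"
    have "(C$1$1, C$1$2, y) \<in> Q" using C y unfolding Edef Q_def by auto
    then have "lam \<le> \<sigma> * f (C$1$1, C$1$2, y)" using q0 by (simp add: lam_def)
    then show "lam \<le> \<sigma> * pix (C *v vector [1, y])" by (simp add: pix_mv f_def)
    show "\<bar>piy (C *v vector [1, y])\<bar> \<le> L" using hyp C y by blast
  qed
  have bL: "L * \<alpha> < \<beta>" using ba apos by (simp add: pos_less_divide_eq mult.commute)
  have sig: "\<sigma> = 1 \<or> \<sigma> = -1" by (simp add: \<sigma>_def)
  interpret S: setting g L \<alpha> \<beta> \<sigma> lam
    using diff g0 Lpos apos bL sig lam key bdd unfolding U_def J_def by unfold_locales auto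
  show ?thesis using S.crossing[OF assms(7-11)] by blast
qed

end
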